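(* Let $G\subset\mathbb R^r$ be a lattice of rank $r$ acting on $C(\mathbb R^r)$ by $f^g(x)=f(x+g)$, and let $n\in\mathbb Z_+$. A function $p\in C(\mathbb R^r)$ is a $G$-periodic polynomial of degree at most $n$ if and only if $D^{n+1}p=0$; that is, $P_n^G=\mathcal P_n(G,C(\mathbb R^r))$.
   Context: $C(\mathbb R^r)$ is the algebra of continuous (real or complex) functions on $\mathbb R^r$; $x_1,\dots,x_r$ are the standard coordinates. $C^G$ is the subalgebra of $G$-periodic continuous functions ($f(x+g)=f(x)$ for all $g\in G$). $P_n^G$ is the space of polynomials in $x_1,\dots,x_r$ of degree at most $n$ with coefficients in $C^G$. $\mathcal C^0(G,A)=A$; for $n\ge1$, $\mathcal C^n(G,A)$ is the space of functions $G^n\to A$ vanishing whenever some argument is $0$; $(d_nc)(g_1,\dots,g_n)=[c(g_1,\dots,g_{n-1})]^{g_n}-c(g_1,\dots,g_{n-1})$; $D^0=\mathrm{id}$, $D^n=d_nD^{n-1}$; $\mathcal P_n(G,A)=\ker D^{n+1}$. *)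

theory Defs
  imports "HOL-Analysis.Analysis"
begin

text \<open>A lattice of rank r in R^r (here R^r = real^'r, r = CARD('r)):
  the integer span of r linearly independent vectors.\<close>
definition full_lattice :: "(real^'r) set \<Rightarrow> bool" where
  "full_lattice G \<longleftrightarrow> (\<exists>b :: 'r \<Rightarrow> real^'r. inj b \<and> independent (range b) \<and>
      G = range (\<lambda>k :: 'r \<Rightarrow> int. \<Sum>i\<in>UNIV. of_int (k i) *\<^sub>R b i))"

definition periodic_cont :: "(real^'r) set \<Rightarrow> (real^'r \<Rightarrow> 'a::real_normed_field) \<Rightarrow> bool" where
  "periodic_cont G f \<longleftrightarrow> continuous_on UNIV f \<and> (\<forall>g\<in>G. \<forall>x. f (x + g) = f x)"

definition periodic_poly :: "(real^'r) set \<Rightarrow> nat \<Rightarrow> (real^'r \<Rightarrow> 'a::real_normed_field) \<Rightarrow> bool" where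
  "periodic_poly G n p \<longleftrightarrow> (\<exists>c :: ('r \<Rightarrow> nat) \<Rightarrow> real^'r \<Rightarrow> 'a.
      (\<forall>\<alpha>. periodic_cont G (c \<alpha>)) \<and>
      p = (\<lambda>x. \<Sum>\<alpha>\<in>{\<alpha>. sum \<alpha> UNIV \<le> n}. c \<alpha> x * (\<Prod>i\<in>UNIV. of_real (x $ i) ^ \<alpha> i)))"

text \<open>D^n p as a cochain: arguments (g_1,...,g_n) as a list of length n;
  (D^{n+1} p)(g_1..g_{n+1}) = [D^n p (g_1..g_n)]^{g_{n+1}} - D^n p (g_1..g_n),
  with the action f^g(x) = f(x+g).\<close>
fun Dop :: "nat \<Rightarrow> (real^'r \<Rightarrow> 'a::ab_group_add) \<Rightarrow> (real^'r) list \<Rightarrow> (real^'r \<Rightarrow> 'a)" where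
  "Dop 0 p gs = p"
| "Dop (Suc n) p gs = (\<lambda>x. Dop n p (butlast gs) (x + last gs) - Dop n p (butlast gs) x)"

definition D_vanishes :: "(real^'r) set \<Rightarrow> nat \<Rightarrow> (real^'r \<Rightarrow> 'a::ab_group_add) \<Rightarrow> bool" where
  "D_vanishes G m p \<longleftrightarrow> (\<forall>gs. length gs = m \<and> set gs \<subseteq> G \<longrightarrow> Dop m p gs = (\<lambda>_. 0))"

end

theory Submission imports Defs begin

definition dd :: "'v::ab_semigroup_add \<Rightarrow> ('v \<Rightarrow> 'a::ab_group_add) \<Rightarrow> ('v \<Rightarrow> 'a)" where
  "dd g f = (\<lambda>x. f (x + g) - f x)"

lemma dd_commute: "comp_fun_commute dd"
  by unfold_locales (auto simp: dd_def fun_eq_iff algebra_simps)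

definition DM :: "'v::ab_semigroup_add multiset \<Rightarrow> ('v \<Rightarrow> 'a::ab_group_add) \<Rightarrow> ('v \<Rightarrow> 'a)" where
  "DM M f = fold_mset dd f M"

lemma DM_empty[simp]: "DM {#} f = f" by (simp add: DM_def)

lemma DM_add[simp]: "DM (add_mset g M) f = dd g (DM M f)"
proof -
  interpret comp_fun_commute dd by (rule dd_commute)
  show ?thesis by (simp add: DM_def)
qed

lemma DM_union: "DM (M + N) f = DM N (DM M f)"
proof -
  interpret comp_fun_commute dd by (rule dd_commute)
  show ?thesis by (simp add: DM_def)
qed

lemma Dop_DM: "length gs = m \<Longrightarrow> Dop m p gs = DM (mset gs) p"
proof (induction m arbitrary: gs)
  case 0 then show ?case by simp
next
  case (Suc m)
  then have "gs = butlast gs @ [last gs]" by (metis append_butlast_last_id list.size(3) nat.distinct(1))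
  then have "mset gs = add_mset (last gs) (mset (butlast gs))"
    by (metis mset.simps(2) mset_append union_mset_add_mset_right add.right_neutral mset.simps(1))
  moreover have "length (butlast gs) = m" using Suc by simp
  ultimately show ?case using Suc by (simp add: dd_def)
qed

definition DV :: "'v::ab_semigroup_add set \<Rightarrow> nat \<Rightarrow> ('v \<Rightarrow> 'a::ab_group_add) \<Rightarrow> bool" where
  "DV G m p \<longleftrightarrow> (\<forall>M. size M = m \<and> set_mset M \<subseteq> G \<longrightarrow> DM M p = (\<lambda>_. 0))"

lemma D_vanishes_DV: "D_vanishes G m p \<longleftrightarrow> DV G m p"
  unfolding D_vanishes_def DV_def
proof safe
  fix M :: "(real^'a) multiset"
  assume H: "\<forall>gs. length gs = size M \<and> set gs \<subseteq> G \<longrightarrow> Dop (size M) p gs = (\<lambda>_. 0)"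
    and S: "set_mset M \<subseteq> G"
  obtain gs where "mset gs = M" using ex_mset by blast
  then show "DM M p = (\<lambda>_. 0)" using H[rule_format, of gs] S Dop_DM[of gs "size M" p] by auto
next
  fix gs :: "(real^'a) list"
  assume H: "\<forall>M. size M = length gs \<and> set_mset M \<subseteq> G \<longrightarrow> DM M p = (\<lambda>_. 0)" and S: "set gs \<subseteq> G"
  then show "Dop (length gs) p gs = (\<lambda>_. 0)" using Dop_DM[of gs "length gs" p] by auto
qed


inductive PP :: "(real^'r) set \<Rightarrow> nat \<Rightarrow> (real^'r \<Rightarrow> 'a::real_normed_field) \<Rightarrow> bool"
  for G where
  per: "periodic_cont G c \<Longrightarrow> PP G k c"
| add: "PP G k f \<Longrightarrow> PP G k h \<Longrightarrow> PP G k (\<lambda>x. f x + h x)"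
| mul: "periodic_cont G c \<Longrightarrow> PP G k f \<Longrightarrow> PP G k (\<lambda>x. c x * f x)"
| var: "PP G k f \<Longrightarrow> PP G (Suc k) (\<lambda>x. of_real (x $ i) * f x)"

lemma periodic_const: "periodic_cont G (\<lambda>x. c)"
  by (simp add: periodic_cont_def)

lemma PP_zero: "PP G k (\<lambda>x. 0)"
  by (rule per) (simp add: periodic_const)

lemma PP_cmul: "PP G k f \<Longrightarrow> PP G k (\<lambda>x. c * f x)"
  using mul[OF periodic_const] by blast

lemma PP_Suc: "PP G k f \<Longrightarrow> PP G (Suc k) f"
proof (induction rule: PP.induct)
  case (per c k) then show ?case by (rule PP.per)
next
  case (add k f h) show ?case by (rule PP.add[OF add.IH])
next
  case (mul c k f) show ?case by (rule PP.mul[OF mul(1) mul.IH])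
next
  case (var k f i) show ?case by (rule PP.var[OF var.IH])
qed

lemma PP_mono: "PP G k f \<Longrightarrow> k \<le> m \<Longrightarrow> PP G m f"
  by (induction m) (auto simp: le_Suc_eq intro: PP_Suc)

lemma PP_cont: "PP G k f \<Longrightarrow> continuous_on UNIV f"
  by (induction rule: PP.induct) (auto simp: periodic_cont_def intro!: continuous_intros)

lemma PP_sum: "(\<And>a. a \<in> S \<Longrightarrow> PP G k (f a)) \<Longrightarrow> PP G k (\<lambda>x. \<Sum>a\<in>S. f a x)"
proof (induction S rule: infinite_finite_induct)
  case (infinite A) then show ?case by (simp add: PP_zero)
next
  case empty then show ?case by (simp add: PP_zero)
next
  case (insert a F) then show ?case by (simp add: PP.add)
qed

lemma PP_diff: "PP G k f \<Longrightarrow> PP G k h \<Longrightarrow> PP G k (\<lambda>x. f x - h x)"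
  using PP.add[of G k f "\<lambda>x. (-1) * h x"] PP_cmul[of G k h "-1"] by simp

lemma PP_mult: "PP G a f \<Longrightarrow> PP G b h \<Longrightarrow> PP G (a + b) (\<lambda>x. f x * h x)"
proof (induction rule: PP.induct)
  case (per c k)
  then show ?case using PP.mul[OF per(1) per(2)] PP_mono[of G b] by fastforce
next
  case (add k f1 f2)
  then show ?case using PP.add[OF add.IH] by (simp add: distrib_right)
next
  case (mul c k f)
  then show ?case using PP.mul[OF mul(1) mul.IH] by (simp add: mult.assoc)
next
  case (var k f i)
  then show ?case using PP.var[OF var.IH, of i] by (simp add: mult.assoc)
qed

lemma PP_var_pow: "PP G k (\<lambda>x. of_real (x $ i) ^ k)"
proof (induction k)
  case 0 then show ?case by (simp add: PP.per periodic_const)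
next
  case (Suc k) then show ?case using PP.var[OF Suc, of i] by simp
qed

lemma PP_prod: "(\<And>a. a \<in> S \<Longrightarrow> PP G (d a) (f a)) \<Longrightarrow> PP G (\<Sum>a\<in>S. d a) (\<lambda>x. \<Prod>a\<in>S. f a x)"
proof (induction S rule: infinite_finite_induct)
  case (infinite A) then show ?case by (simp add: PP.per periodic_const)
next
  case empty then show ?case by (simp add: PP.per periodic_const)
next
  case (insert a F) then show ?case by (simp add: PP_mult)
qed

lemma PP_periodic_0: "PP G k f \<Longrightarrow> k = 0 \<Longrightarrow> periodic_cont G f"
  by (induction rule: PP.induct) (auto simp: periodic_cont_def intro!: continuous_intros)


lemma periodic_shift: "periodic_cont G c \<Longrightarrow> g \<in> G \<Longrightarrow> c (x + g) = c x"
  by (simp add: periodic_cont_def)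

lemma PP_shift: "PP G k f \<Longrightarrow> g \<in> G \<Longrightarrow> PP G k (\<lambda>x. f (x + g))"
proof (induction rule: PP.induct)
  case (per c k) then show ?case by (simp add: periodic_shift PP.per)
next
  case (add k f h) then show ?case by (simp add: PP.add)
next
  case (mul c k f) then show ?case using PP.mul[OF mul(1) mul.IH[OF mul.prems]] by (simp add: periodic_shift[OF mul(1)])
next
  case (var k f i)
  have "PP G (Suc k) (\<lambda>x. of_real (x $ i) * f (x + g) + of_real (g $ i) * f (x + g))"
    by (rule PP.add[OF PP.var[OF var.IH[OF var.prems]] PP_Suc[OF PP_cmul[OF var.IH[OF var.prems]]]])
  then show ?case by (simp add: distrib_right)
qed

lemma PP_dd: "PP G k f \<Longrightarrow> g \<in> G \<Longrightarrow> (k = 0 \<longrightarrow> dd g f = (\<lambda>_. 0)) \<and> (\<forall>j. k = Suc j \<longrightarrow> PP G j (dd g f))"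
proof (induction rule: PP.induct)
  case (per c k) then show ?case by (simp add: dd_def periodic_shift PP_zero)
next
  case (add k f h)
  have e: "dd g (\<lambda>x. f x + h x) = (\<lambda>x. dd g f x + dd g h x)" by (simp add: dd_def fun_eq_iff)
  show ?case using add.IH[OF add.prems] PP.add unfolding e by (auto simp: fun_eq_iff)
next
  case (mul c k f)
  have e: "dd g (\<lambda>x. c x * f x) = (\<lambda>x. c x * dd g f x)"
    by (simp add: dd_def fun_eq_iff periodic_shift[OF mul(1) mul.prems] right_diff_distrib)
  show ?case using mul.IH[OF mul.prems] PP.mul[OF mul(1)] unfolding e by (auto simp: fun_eq_iff)
next
  case (var k f i)
  have e: "dd g (\<lambda>x. of_real (x $ i) * f x) = (\<lambda>x. of_real (x $ i) * dd g f x + of_real (g $ i) * f (x + g))"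
    by (simp add: dd_def fun_eq_iff algebra_simps)
  have sh: "PP G k (\<lambda>x. of_real (g $ i) * f (x + g))" by (rule PP_cmul[OF PP_shift[OF var(1) var.prems]])
  show ?case
  proof (cases k)
    case 0
    then have "dd g f = (\<lambda>_. 0)" using var.IH[OF var.prems] by simp
    then show ?thesis using sh 0 unfolding e by simp
  next
    case (Suc j)
    then have "PP G j (dd g f)" using var.IH[OF var.prems] by simp
    then show ?thesis using sh Suc unfolding e by (auto intro: PP.add PP.var)
  qed
qed

lemma PP_DM: "PP G k f \<Longrightarrow> set_mset M \<subseteq> G \<Longrightarrow>
   (size M \<le> k \<longrightarrow> PP G (k - size M) (DM M f)) \<and> (k < size M \<longrightarrow> DM M f = (\<lambda>_. 0))"
proof (induction M)
  case empty then show ?case by simp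
next
  case (add g M)
  then have g: "g \<in> G" and IH: "(size M \<le> k \<longrightarrow> PP G (k - size M) (DM M f)) \<and> (k < size M \<longrightarrow> DM M f = (\<lambda>_. 0))" by auto
  consider "size M < k" | "size M = k" | "k < size M" by linarith
  then show ?case
  proof cases
    case 1
    then obtain j where j: "k - size M = Suc j" by (metis Suc_diff_Suc)
    then have "PP G j (dd g (DM M f))" using PP_dd[of G "k - size M" "DM M f" g] IH 1 g by auto
    moreover have "k - size (add_mset g M) = j" using j by simp
    ultimately show ?thesis using 1 by simp
  next
    case 2
    then have "dd g (DM M f) = (\<lambda>_. 0)" using PP_dd[of G 0 "DM M f" g] IH g by auto
    then show ?thesis using 2 by simp
  next
    case 3
    then show ?thesis using IH by (simp add: dd_def)
  qed
qed

lemma PP_DV: "PP G n p \<Longrightarrow> DV G (Suc n) p"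
  unfolding DV_def using PP_DM[of G n p] by auto

lemma DM_diff: "DM M (\<lambda>x. f x - h x) = (\<lambda>x. DM M f x - DM M h x)"
  by (induction M) (auto simp: dd_def fun_eq_iff algebra_simps)

lemma DM_sum: "DM M (\<lambda>x. \<Sum>a\<in>S. f a x) = (\<lambda>x. \<Sum>a\<in>S. DM M (f a) x)"
  by (induction M) (auto simp: dd_def fun_eq_iff sum_subtractf)

lemma DM_mul: "periodic_cont G c \<Longrightarrow> set_mset M \<subseteq> G \<Longrightarrow> DM M (\<lambda>x. c x * f x) = (\<lambda>x. c x * DM M f x)"
proof (induction M)
  case empty then show ?case by simp
next
  case (add g M)
  then have g: "g \<in> G" and IH: "DM M (\<lambda>x. c x * f x) = (\<lambda>x. c x * DM M f x)" by auto
  have "\<And>x. c (x + g) = c x" using periodic_shift[OF add.prems(1) g] .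
  then show ?case using IH by (simp add: dd_def fun_eq_iff right_diff_distrib)
qed

lemma DM_cont: "continuous_on UNIV (f :: real^'r \<Rightarrow> 'a::real_normed_field) \<Longrightarrow> continuous_on UNIV (DM M f)"
proof (induction M)
  case empty then show ?case by simp
next
  case (add g M)
  then have c: "continuous_on UNIV (DM M f)" by simp
  have "continuous_on UNIV (\<lambda>x. DM M f (x + g))"
    by (rule continuous_on_compose2[OF c]) (auto intro!: continuous_intros)
  then show ?case using c by (simp add: dd_def continuous_on_diff)
qed


definition mnm :: "('r \<Rightarrow> nat) \<Rightarrow> real^'r \<Rightarrow> 'a::real_normed_field" where
  "mnm \<alpha> x = (\<Prod>i\<in>UNIV. of_real (x $ i) ^ \<alpha> i)"

definition Sdeg :: "nat \<Rightarrow> ('r::finite \<Rightarrow> nat) set" where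
  "Sdeg n = {\<alpha>. sum \<alpha> UNIV \<le> n}"

lemma finite_Sdeg: "finite (Sdeg n :: ('r::finite \<Rightarrow> nat) set)"
proof -
  have "Sdeg n \<subseteq> {f::'r\<Rightarrow>nat. \<forall>x. (x \<in> UNIV \<longrightarrow> f x \<in> {..n}) \<and> (x \<notin> UNIV \<longrightarrow> f x = 0)}" (is "_ \<subseteq> ?S")
  proof
    fix f :: "'r \<Rightarrow> nat" assume "f \<in> Sdeg n"
    then have "sum f UNIV \<le> n" by (simp add: Sdeg_def)
    moreover have "\<forall>x. f x \<le> sum f UNIV" by (intro allI member_le_sum) auto
    ultimately show "f \<in> ?S"
      using order_trans by auto
  qed
  moreover have "finite {f::'r\<Rightarrow>nat. \<forall>x. (x \<in> UNIV \<longrightarrow> f x \<in> {..n}) \<and> (x \<notin> UNIV \<longrightarrow> f x = 0)}"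
    by (rule finite_set_of_finite_funs) auto
  ultimately show ?thesis using finite_subset by blast
qed

lemma periodic_poly_alt: "periodic_poly G n (p :: real^'r \<Rightarrow> 'a::real_normed_field) \<longleftrightarrow> (\<exists>c :: ('r \<Rightarrow> nat) \<Rightarrow> real^'r \<Rightarrow> 'a. (\<forall>\<alpha>. periodic_cont G (c \<alpha>)) \<and> p = (\<lambda>x. \<Sum>\<alpha>\<in>Sdeg n. c \<alpha> x * mnm \<alpha> x))"
  unfolding periodic_poly_def Sdeg_def mnm_def by simp

lemma PP_mono_mnmmial: "PP G (sum \<alpha> UNIV) (mnm \<alpha>)"
  unfolding mnm_def[abs_def] by (rule PP_prod) (rule PP_var_pow)

lemma periodic_poly_PP: "periodic_poly G n (p :: real^'r \<Rightarrow> 'a::real_normed_field) \<Longrightarrow> PP G n p"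
proof -
  assume "periodic_poly G n p"
  then obtain c :: "('r \<Rightarrow> nat) \<Rightarrow> real^'r \<Rightarrow> 'a" where c: "\<forall>\<alpha>. periodic_cont G (c \<alpha>)" and p: "p = (\<lambda>x. \<Sum>\<alpha>\<in>Sdeg n. c \<alpha> x * mnm \<alpha> x)"
    unfolding periodic_poly_alt by blast
  have "PP G n (\<lambda>x. \<Sum>\<alpha>\<in>Sdeg n. c \<alpha> x * mnm \<alpha> x)"
  proof (rule PP_sum)
    fix \<alpha> :: "'r \<Rightarrow> nat" assume "\<alpha> \<in> Sdeg n"
    then have "sum \<alpha> UNIV \<le> n" by (simp add: Sdeg_def)
    then show "PP G n (\<lambda>x. c \<alpha> x * mnm \<alpha> x)"
      using PP.mul[OF c[rule_format] PP_mono[OF PP_mono_mnmmial]] by blast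
  qed
  then show ?thesis using p by simp
qed

lemma periodic_cont_add: "periodic_cont G f \<Longrightarrow> periodic_cont G h \<Longrightarrow> periodic_cont G (\<lambda>x. f x + h x)"
  by (auto simp: periodic_cont_def intro!: continuous_intros)

lemma periodic_cont_mult: "periodic_cont G f \<Longrightarrow> periodic_cont G h \<Longrightarrow> periodic_cont G (\<lambda>x. f x * h x)"
  by (auto simp: periodic_cont_def intro!: continuous_intros)

lemma sum_upd_UNIV: "sum (f(i := v)) (UNIV::'r::finite set) + f i = sum f UNIV + (v::nat)"
proof -
  have "sum (f(i := v)) UNIV = (f(i := v)) i + sum (f(i := v)) (UNIV - {i})" by (rule sum.remove) auto
  moreover have "sum (f(i := v)) (UNIV - {i}) = sum f (UNIV - {i})" by (rule sum.cong) auto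
  moreover have "sum f UNIV = f i + sum f (UNIV - {i})" by (rule sum.remove) auto
  ultimately show ?thesis by simp
qed

lemma mnm_upd: "mnm (\<alpha>(i := Suc (\<alpha> i))) x = of_real (x $ i) * mnm \<alpha> x"
proof -
  have A: "mnm (\<alpha>(i := Suc (\<alpha> i))) x = of_real (x $ i) ^ (\<alpha>(i := Suc (\<alpha> i))) i * (\<Prod>j\<in>UNIV - {i}. of_real (x $ j) ^ (\<alpha>(i := Suc (\<alpha> i))) j)"
    unfolding mnm_def by (rule prod.remove) auto
  have B: "(\<Prod>j\<in>UNIV - {i}. of_real (x $ j) ^ (\<alpha>(i := Suc (\<alpha> i))) j) = (\<Prod>j\<in>UNIV - {i}. of_real (x $ j) ^ \<alpha> j)"
    by (rule prod.cong) auto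
  have C: "mnm \<alpha> x = of_real (x $ i) ^ \<alpha> i * (\<Prod>j\<in>UNIV - {i}. of_real (x $ j) ^ \<alpha> j)"
    unfolding mnm_def by (rule prod.remove) auto
  show ?thesis unfolding A B C by (simp add: mult.assoc)
qed

lemma PP_periodic_poly: "PP G n (p :: real^'r \<Rightarrow> 'a::real_normed_field) \<Longrightarrow> periodic_poly G n p"
proof (induction rule: PP.induct)
  case (per c k)
  let ?c = "\<lambda>\<alpha>::'r\<Rightarrow>nat. if \<alpha> = (\<lambda>_. 0) then c else (\<lambda>_. 0)"
  have A: "\<forall>\<alpha>. periodic_cont G (?c \<alpha>)" using per by (simp add: periodic_const)
  have B: "c = (\<lambda>x. \<Sum>\<alpha>\<in>Sdeg k. ?c \<alpha> x * mnm \<alpha> x)"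
  proof
    fix x
    have "(\<Sum>\<alpha>\<in>Sdeg k. ?c \<alpha> x * mnm \<alpha> x) = (\<Sum>\<alpha>\<in>Sdeg k. if \<alpha> = (\<lambda>_. 0) then c x * mnm \<alpha> x else 0)"
      by (rule sum.cong) auto
    also have "\<dots> = c x * mnm (\<lambda>_. 0) x" by (simp add: sum.delta[OF finite_Sdeg]) (simp add: Sdeg_def)
    finally show "c x = (\<Sum>\<alpha>\<in>Sdeg k. ?c \<alpha> x * mnm \<alpha> x)" by (simp add: mnm_def)
  qed
  show ?case unfolding periodic_poly_alt
    apply (rule exI[where x="?c"]) using A B by blast
next
  case (add k f h)
  then obtain c1 c2 where c1: "\<forall>\<alpha>. periodic_cont G (c1 \<alpha>)" "f = (\<lambda>x. \<Sum>\<alpha>\<in>Sdeg k. c1 \<alpha> x * mnm \<alpha> x)"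
    and c2: "\<forall>\<alpha>. periodic_cont G (c2 \<alpha>)" "h = (\<lambda>x. \<Sum>\<alpha>\<in>Sdeg k. c2 \<alpha> x * mnm \<alpha> x)"
    unfolding periodic_poly_alt by blast
  let ?c = "\<lambda>\<alpha> x. c1 \<alpha> x + c2 \<alpha> x"
  have A: "\<forall>\<alpha>. periodic_cont G (?c \<alpha>)" using c1 c2 by (simp add: periodic_cont_add)
  have B: "(\<lambda>x. f x + h x) = (\<lambda>x. \<Sum>\<alpha>\<in>Sdeg k. ?c \<alpha> x * mnm \<alpha> x)"
    using c1 c2 by (simp add: sum.distrib distrib_right)
  show ?case unfolding periodic_poly_alt
    apply (rule exI[where x="?c"]) using A B by blast
next
  case (mul c k f)
  then obtain c1 where c1: "\<forall>\<alpha>. periodic_cont G (c1 \<alpha>)" "f = (\<lambda>x. \<Sum>\<alpha>\<in>Sdeg k. c1 \<alpha> x * mnm \<alpha> x)"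
    unfolding periodic_poly_alt by blast
  let ?c = "\<lambda>\<alpha> x. c x * c1 \<alpha> x"
  have A: "\<forall>\<alpha>. periodic_cont G (?c \<alpha>)" using c1 mul(1) by (simp add: periodic_cont_mult)
  have B: "(\<lambda>x. c x * f x) = (\<lambda>x. \<Sum>\<alpha>\<in>Sdeg k. ?c \<alpha> x * mnm \<alpha> x)"
    using c1 by (simp add: sum_distrib_left mult.assoc)
  show ?case unfolding periodic_poly_alt
    apply (rule exI[where x="?c"]) using A B by blast
next
  case (var k f i)
  then obtain c1 where c1: "\<forall>\<alpha>. periodic_cont G (c1 \<alpha>)" "f = (\<lambda>x. \<Sum>\<alpha>\<in>Sdeg k. c1 \<alpha> x * mnm \<alpha> x)"
    unfolding periodic_poly_alt by blast
  let ?c = "\<lambda>\<beta>::'r\<Rightarrow>nat. if 0 < \<beta> i then c1 (\<beta>(i := \<beta> i - 1)) else (\<lambda>_. 0)"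
  let ?h = "\<lambda>\<alpha>::'r\<Rightarrow>nat. \<alpha>(i := Suc (\<alpha> i))"
  have A: "\<forall>\<alpha>. periodic_cont G (?c \<alpha>)" using c1 by (simp add: periodic_const)
  have B: "(\<lambda>x. of_real (x $ i) * f x) = (\<lambda>x. \<Sum>\<beta>\<in>Sdeg (Suc k). ?c \<beta> x * mnm \<beta> x)"
  proof
    fix x
    have inj: "inj_on ?h (Sdeg k)"
    proof
      fix a b :: "'r \<Rightarrow> nat" assume eq: "?h a = ?h b"
      have "a j = b j" for j
      proof (cases "j = i")
        case True then show ?thesis using fun_cong[OF eq, of i] by simp
      next
        case False then show ?thesis using fun_cong[OF eq, of j] by simp
      qed
      then show "a = b" by (rule ext)
    qed
    have img: "?h ` Sdeg k = {\<beta>\<in>Sdeg (Suc k). 0 < \<beta> i}"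
    proof safe
      fix a :: "'r \<Rightarrow> nat" assume "a \<in> Sdeg k"
      then show "?h a \<in> Sdeg (Suc k)" using sum_upd_UNIV[of a i "Suc (a i)"] by (simp add: Sdeg_def)
    next
      fix a :: "'r \<Rightarrow> nat" show "0 < (?h a) i" by simp
    next
      fix b :: "'r \<Rightarrow> nat" assume b: "b \<in> Sdeg (Suc k)" "0 < b i"
      have "b = ?h (b(i := b i - 1))" using b(2) by (auto simp: fun_eq_iff)
      moreover have "b(i := b i - 1) \<in> Sdeg k"
        using sum_upd_UNIV[of b i "b i - 1"] b by (simp add: Sdeg_def)
      ultimately show "b \<in> ?h ` Sdeg k" by blast
    qed
    have "(\<Sum>\<beta>\<in>Sdeg (Suc k). ?c \<beta> x * mnm \<beta> x) = (\<Sum>\<beta>\<in>{\<beta>\<in>Sdeg (Suc k). 0 < \<beta> i}. c1 (\<beta>(i := \<beta> i - 1)) x * mnm \<beta> x)"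
      unfolding sum.inter_filter[OF finite_Sdeg] by (rule sum.cong) auto
    also have "\<dots> = (\<Sum>\<alpha>\<in>Sdeg k. c1 \<alpha> x * mnm (?h \<alpha>) x)"
      unfolding img[symmetric] by (simp add: sum.reindex[OF inj])
    also have "\<dots> = of_real (x $ i) * f x"
      using c1 by (simp add: mnm_upd sum_distrib_left mult.left_commute)
    finally show "of_real (x $ i) * f x = (\<Sum>\<beta>\<in>Sdeg (Suc k). ?c \<beta> x * mnm \<beta> x)" by simp
  qed
  show ?case unfolding periodic_poly_alt
    apply (rule exI[where x="?c"]) using A B by blast
qed


definition lat :: "('r \<Rightarrow> real^'r) \<Rightarrow> (real^'r) set" where
  "lat b = range (\<lambda>k::'r\<Rightarrow>int. \<Sum>i\<in>UNIV. of_int (k i) *\<^sub>R b i)"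

lemma lat_memI: "g = (\<Sum>i\<in>UNIV. of_int (k i) *\<^sub>R b i) \<Longrightarrow> g \<in> lat b"
  unfolding lat_def by (rule image_eqI[where x=k]) auto

lemma lat_add: "g \<in> lat b \<Longrightarrow> h \<in> lat b \<Longrightarrow> g + h \<in> lat b"
proof -
  assume "g \<in> lat b" "h \<in> lat b"
  then obtain k k' where "g = (\<Sum>i\<in>UNIV. of_int (k i) *\<^sub>R b i)" "h = (\<Sum>i\<in>UNIV. of_int (k' i) *\<^sub>R b i)"
    unfolding lat_def by auto
  then have "g + h = (\<Sum>i\<in>UNIV. of_int (k i + k' i) *\<^sub>R b i)"
    by (simp add: sum.distrib scaleR_add_left)
  then show ?thesis by (rule lat_memI)
qed

lemma lat_uminus: "g \<in> lat b \<Longrightarrow> - g \<in> lat b"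
proof -
  assume "g \<in> lat b"
  then obtain k where "g = (\<Sum>i\<in>UNIV. of_int (k i) *\<^sub>R b i)" unfolding lat_def by auto
  then have "- g = (\<Sum>i\<in>UNIV. of_int (- k i) *\<^sub>R b i)" by (simp add: sum_negf)
  then show ?thesis by (rule lat_memI)
qed

lemma lat_zero: "0 \<in> lat b"
proof -
  have "(0::real^'a) = (\<Sum>i\<in>UNIV. of_int ((\<lambda>_. 0::int) i) *\<^sub>R b i)" by simp
  then show ?thesis by (rule lat_memI)
qed

lemma lat_smul: "of_int c *\<^sub>R b i \<in> lat b"
proof -
  have "(\<Sum>j\<in>UNIV. of_int (if j = i then c else 0) *\<^sub>R b j) = (\<Sum>j\<in>UNIV. if j = i then of_int c *\<^sub>R b j else 0)"
    by (rule sum.cong) auto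
  also have "\<dots> = of_int c *\<^sub>R b i" by (simp add: sum.delta')
  finally show ?thesis by (intro lat_memI) (rule sym)
qed

lemma lat_b: "b i \<in> lat b"
  using lat_smul[of 1 b i] by simp

lemma lat_sum: "(\<Sum>i\<in>S. of_int (k i) *\<^sub>R b i) \<in> lat b"
proof (induction S rule: infinite_finite_induct)
  case (infinite A) then show ?case by (simp add: lat_zero)
next
  case empty then show ?case by (simp add: lat_zero)
next
  case (insert a F) then show ?case by (simp add: lat_add lat_smul)
qed

lemma additive_vanish:
  fixes \<phi> :: "real^'r \<Rightarrow> real^'r \<Rightarrow> 'a::ab_group_add"
  assumes add: "\<And>g h. g \<in> lat b \<Longrightarrow> h \<in> lat b \<Longrightarrow> \<phi> (g + h) = (\<lambda>x. \<phi> g x + \<phi> h x)"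
    and bas: "\<And>i. \<phi> (b i) = (\<lambda>x. 0)"
    and g: "g \<in> lat b"
  shows "\<phi> g = (\<lambda>x. 0)"
proof -
  have z: "\<phi> 0 = (\<lambda>x. 0)"
  proof
    fix x
    have "\<phi> 0 x = \<phi> 0 x + \<phi> 0 x" using fun_cong[OF add[OF lat_zero lat_zero], of x] by simp
    then show "\<phi> 0 x = 0" by (metis add_cancel_right_right)
  qed
  have nat: "\<phi> (of_nat n *\<^sub>R b i) = (\<lambda>x. 0)" for n i
  proof (induction n)
    case 0 then show ?case using z by simp
  next
    case (Suc n)
    have m: "of_nat n *\<^sub>R b i \<in> lat b" using lat_smul[of "int n" b i] by simp
    have "of_nat (Suc n) *\<^sub>R b i = of_nat n *\<^sub>R b i + b i" by (simp add: scaleR_add_left)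
    then show ?case using add[OF m lat_b, of i] Suc bas by simp
  qed
  have int: "\<phi> (of_int c *\<^sub>R b i) = (\<lambda>x. 0)" for c i
  proof (cases "c \<ge> 0")
    case True
    then obtain n where "c = int n" using nonneg_eq_int by blast
    then show ?thesis using nat[of n i] by simp
  next
    case False
    define n where "n = nat (- c)"
    have c: "c = - int n" using False n_def by simp
    let ?v = "of_nat n *\<^sub>R b i"
    have m: "?v \<in> lat b" using lat_smul[of "int n" b i] by simp
    have "\<phi> (?v + - ?v) = (\<lambda>x. \<phi> ?v x + \<phi> (- ?v) x)" by (rule add[OF m lat_uminus[OF m]])
    then have "\<phi> (- ?v) = (\<lambda>x. 0)" using z nat[of n i] by (simp add: fun_eq_iff)
    then show ?thesis using c by simp
  qed
  have sum: "\<phi> (\<Sum>i\<in>S. of_int (k i) *\<^sub>R b i) = (\<lambda>x. 0)" for S k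
  proof (induction S rule: infinite_finite_induct)
    case (infinite A) then show ?case using z by simp
  next
    case empty then show ?case using z by simp
  next
    case (insert a F)
    have "\<phi> (of_int (k a) *\<^sub>R b a + (\<Sum>i\<in>F. of_int (k i) *\<^sub>R b i)) = (\<lambda>x. \<phi> (of_int (k a) *\<^sub>R b a) x + \<phi> (\<Sum>i\<in>F. of_int (k i) *\<^sub>R b i) x)"
      by (rule add[OF lat_smul lat_sum])
    then show ?case using insert int[of "k a" a] by simp
  qed
  from g obtain k where "g = (\<Sum>i\<in>UNIV. of_int (k i) *\<^sub>R b i)" unfolding lat_def by auto
  then show ?thesis using sum by simp
qed

lemma extend:
  fixes u :: "real^'r \<Rightarrow> 'a::ab_group_add"
  assumes G: "G = lat b" and D: "DV G (Suc m) u"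
    and bas: "\<And>N. size N = m \<Longrightarrow> DM (image_mset b N) u = (\<lambda>_. 0)"
  shows "DV G m u"
proof -
  have bG: "b i \<in> G" for i using G lat_b by simp
  have imG: "set_mset (image_mset b N) \<subseteq> G" for N using bG by auto
  have main: "set_mset M \<subseteq> G \<Longrightarrow> \<forall>N::'r multiset. size M + size N = m \<longrightarrow> DM (M + image_mset b N) u = (\<lambda>_. 0)" for M
  proof (induction M)
    case empty then show ?case using bas by simp
  next
    case (add g M)
    show ?case
    proof (intro allI impI)
      fix N :: "'r multiset" assume sz: "size (add_mset g M) + size N = m"
      have gG: "g \<in> G" and MG: "set_mset M \<subseteq> G" using add.prems by auto
      have IH: "\<forall>N::'r multiset. size M + size N = m \<longrightarrow> DM (M + image_mset b N) u = (\<lambda>_. 0)" using add.IH MG by blast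
      define F where "F = DM (M + image_mset b N) u"
      define \<phi> where "\<phi> h = dd h F" for h
      have S: "set_mset (M + image_mset b N) \<subseteq> G" using MG imG by auto
      have \<phi>add: "\<phi> (g1 + g2) = (\<lambda>x. \<phi> g1 x + \<phi> g2 x)" if "g1 \<in> lat b" "g2 \<in> lat b" for g1 g2
      proof
        fix x
        have "DM (add_mset g1 (add_mset g2 (M + image_mset b N))) u = (\<lambda>_. 0)"
          using D[unfolded DV_def, rule_format, of "add_mset g1 (add_mset g2 (M + image_mset b N))"] S that G sz by auto
        then have "dd g1 (dd g2 F) x = 0" by (simp add: F_def)
        then have e: "F (x + g1 + g2) - F (x + g1) = F (x + g2) - F x"
          by (simp add: dd_def algebra_simps)
        have "\<phi> (g1 + g2) x = (F (x + g1 + g2) - F (x + g1)) + (F (x + g1) - F x)"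
          unfolding \<phi>_def dd_def by (simp add: add.assoc)
        also have "\<dots> = \<phi> g2 x + \<phi> g1 x" unfolding e \<phi>_def dd_def ..
        finally show "\<phi> (g1 + g2) x = \<phi> g1 x + \<phi> g2 x" by simp
      qed
      have \<phi>bas: "\<phi> (b i) = (\<lambda>x. 0)" for i
      proof -
        have "size M + size (add_mset i N) = m" using sz by simp
        then have "DM (M + image_mset b (add_mset i N)) u = (\<lambda>_. 0)" using IH by blast
        then show ?thesis by (simp add: \<phi>_def F_def)
      qed
      have "\<phi> g = (\<lambda>x. 0)" by (rule additive_vanish[OF \<phi>add \<phi>bas]) (use gG G in simp_all)
      then show "DM (add_mset g M + image_mset b N) u = (\<lambda>_. 0)" by (simp add: \<phi>_def F_def)
    qed
  qed
  show ?thesis unfolding DV_def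
  proof (intro allI impI)
    fix M assume M: "size M = m \<and> set_mset M \<subseteq> G"
    then have "DM (M + image_mset b {#}) u = (\<lambda>_. 0)" using main[of M] by simp
    then show "DM M u = (\<lambda>_. 0)" by simp
  qed
qed


definition ms :: "('r::finite \<Rightarrow> nat) \<Rightarrow> 'r multiset" where
  "ms \<alpha> = (\<Sum>i\<in>UNIV. replicate_mset (\<alpha> i) i)"

lemma count_ms: "count (ms \<alpha>) = \<alpha>"
proof
  fix j
  have "count (ms \<alpha>) j = (\<Sum>i\<in>UNIV. if j = i then \<alpha> i else 0)"
    unfolding ms_def count_sum count_replicate_mset ..
  also have "\<dots> = \<alpha> j" by simp
  finally show "count (ms \<alpha>) j = \<alpha> j" .
qed

lemma ms_count: "ms (count N) = N"
  by (rule multiset_eqI) (simp add: count_ms)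

lemma size_ms: "size (ms \<alpha>) = sum \<alpha> UNIV"
  unfolding ms_def by simp

lemma size_count: "size (N :: 'r::finite multiset) = sum (count N) UNIV"
  using size_ms[of "count N"] by (simp add: ms_count)

definition Cb :: "('r \<Rightarrow> real^'r \<Rightarrow> real) \<Rightarrow> ('r \<Rightarrow> nat) \<Rightarrow> real^'r \<Rightarrow> 'a::real_normed_field" where
  "Cb y \<alpha> x = of_real (\<Prod>i\<in>UNIV. y i x gchoose \<alpha> i)"

lemma linear_coord: "linear (l :: real^'r \<Rightarrow> real) \<Longrightarrow> l x = (\<Sum>i\<in>UNIV. x $ i * l (axis i 1))"
proof -
  assume l: "linear l"
  have "x = (\<Sum>i\<in>UNIV. x $ i *\<^sub>R axis i 1)"
    using basis_expansion[of x] by (simp add: scalar_mult_eq_scaleR)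
  then have "l x = l (\<Sum>i\<in>UNIV. x $ i *\<^sub>R axis i 1)" by simp
  also have "\<dots> = (\<Sum>i\<in>UNIV. x $ i * l (axis i 1))"
    by (simp add: linear_sum[OF l] linear_cmul[OF l])
  finally show ?thesis .
qed

lemma PP_linear: "linear (l :: real^'r \<Rightarrow> real) \<Longrightarrow> PP G 1 (\<lambda>x. (of_real (l x) :: 'a::real_normed_field))"
proof -
  assume l: "linear l"
  have e: "(\<lambda>x. (of_real (l x) :: 'a)) = (\<lambda>x. \<Sum>i\<in>UNIV. of_real (l (axis i 1)) * (of_real (x $ i) * 1))"
  proof
    fix x
    show "(of_real (l x) :: 'a) = (\<Sum>i\<in>UNIV. of_real (l (axis i 1)) * (of_real (x $ i) * 1))"
      unfolding linear_coord[OF l, of x] of_real_sum by (simp add: mult.commute)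
  qed
  have "PP G 1 (\<lambda>x. \<Sum>i\<in>UNIV. (of_real (l (axis i 1)) :: 'a) * (of_real (x $ i) * 1))"
  proof (rule PP_sum)
    fix i
    have "PP G 0 (\<lambda>x. 1::'a)" by (rule PP.per[OF periodic_const])
    then have "PP G (Suc 0) (\<lambda>x. (of_real (x $ i) :: 'a) * 1)" by (rule PP.var)
    then show "PP G 1 (\<lambda>x. (of_real (l (axis i 1)) :: 'a) * (of_real (x $ i) * 1))" by (simp add: PP_cmul)
  qed
  then show ?thesis unfolding e .
qed

lemma PP_gchoose:
  assumes t: "PP G 1 (\<lambda>x. (of_real (t x) :: 'a::real_normed_field))"
  shows "PP G k (\<lambda>x. (of_real (t x gchoose k) :: 'a))"
proof -
  have e: "(\<lambda>x. (of_real (t x gchoose k) :: 'a)) = (\<lambda>x. of_real (inverse (fact k)) * (\<Prod>j\<in>{0..<k}. (of_real (t x) - of_nat j)))"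
    by (simp add: gbinomial_prod_rev of_real_prod divide_inverse mult.commute)
  have "PP G (\<Sum>j\<in>{0..<k}. 1) (\<lambda>x. \<Prod>j\<in>{0..<k}. ((of_real (t x) :: 'a) - of_nat j))"
  proof (rule PP_prod)
    fix j
    show "PP G 1 (\<lambda>x. (of_real (t x) :: 'a) - of_nat j)"
      by (rule PP_diff[OF t PP.per[OF periodic_const]])
  qed
  then have "PP G k (\<lambda>x. \<Prod>j\<in>{0..<k}. ((of_real (t x) :: 'a) - of_nat j))" by simp
  then show ?thesis unfolding e by (rule PP_cmul)
qed

lemma PP_Cb: "(\<And>i. linear (y i)) \<Longrightarrow> PP G (sum \<alpha> UNIV) (Cb y \<alpha> :: real^'r \<Rightarrow> 'a::real_normed_field)"
proof -
  assume y: "\<And>i. linear (y i)"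
  have e: "(Cb y \<alpha> :: real^'r \<Rightarrow> 'a) = (\<lambda>x. \<Prod>i\<in>UNIV. of_real (y i x gchoose \<alpha> i))"
    by (simp add: Cb_def[abs_def] of_real_prod)
  show ?thesis unfolding e
    by (rule PP_prod) (rule PP_gchoose[OF PP_linear[OF y]])
qed

lemma Cb_zero: "Cb y (\<lambda>_. 0) x = 1"
  by (simp add: Cb_def)

lemma dd_Cb:
  assumes sh: "\<And>i x. y i (x + b j) = y i x + (if i = j then 1 else 0)"
  shows "dd (b j) (Cb y \<alpha> :: real^'r \<Rightarrow> 'a::real_normed_field) = (if \<alpha> j = 0 then (\<lambda>x. 0) else Cb y (\<alpha>(j := \<alpha> j - 1)))"
proof
  fix x
  define R where "R = (\<Prod>i\<in>UNIV - {j}. y i x gchoose \<alpha> i)"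
  have R': "(\<Prod>i\<in>UNIV - {j}. y i (x + b j) gchoose \<alpha> i) = R"
    unfolding R_def by (rule prod.cong) (auto simp: sh)
  have R'': "(\<Prod>i\<in>UNIV - {j}. y i x gchoose (\<alpha>(j := \<alpha> j - 1)) i) = R"
    unfolding R_def by (rule prod.cong) auto
  have c1: "(\<Prod>i\<in>UNIV. y i (x + b j) gchoose \<alpha> i) = (y j x + 1 gchoose \<alpha> j) * R"
    using prod.remove[of UNIV j "\<lambda>i. y i (x + b j) gchoose \<alpha> i"] R' sh by simp
  have c2: "(\<Prod>i\<in>UNIV. y i x gchoose \<alpha> i) = (y j x gchoose \<alpha> j) * R"
    using prod.remove[of UNIV j "\<lambda>i. y i x gchoose \<alpha> i"] R_def by simp
  have c3: "(\<Prod>i\<in>UNIV. y i x gchoose (\<alpha>(j := \<alpha> j - 1)) i) = (y j x gchoose (\<alpha> j - 1)) * R"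
    using prod.remove[of UNIV j "\<lambda>i. y i x gchoose (\<alpha>(j := \<alpha> j - 1)) i"] R'' by simp
  have L: "dd (b j) (Cb y \<alpha> :: real^'r \<Rightarrow> 'a) x = of_real ((y j x + 1 gchoose \<alpha> j) * R - (y j x gchoose \<alpha> j) * R)"
    unfolding dd_def Cb_def c1 c2 by simp
  show "dd (b j) (Cb y \<alpha> :: real^'r \<Rightarrow> 'a) x = (if \<alpha> j = 0 then (\<lambda>x. 0) else Cb y (\<alpha>(j := \<alpha> j - 1))) x"
  proof (cases "\<alpha> j")
    case 0
    then show ?thesis using L by simp
  next
    case (Suc a)
    have "(y j x + 1 gchoose \<alpha> j) - (y j x gchoose \<alpha> j) = (y j x gchoose a)"
      using Suc gbinomial_Suc_Suc[of "y j x" a] by simp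
    then have "(y j x + 1 gchoose \<alpha> j) * R - (y j x gchoose \<alpha> j) * R = (y j x gchoose (\<alpha> j - 1)) * R"
      using Suc by (simp add: left_diff_distrib[symmetric])
    moreover have "Cb y (\<alpha>(j := \<alpha> j - 1)) x = (of_real ((y j x gchoose (\<alpha> j - 1)) * R) :: 'a)"
      unfolding Cb_def c3 ..
    ultimately show ?thesis using Suc unfolding L by simp
  qed
qed

lemma DM_Cb:
  assumes sh: "\<And>i j x. y i (x + b j) = y i x + (if i = j then 1 else 0)"
  shows "DM (image_mset b N) (Cb y \<alpha> :: real^'r \<Rightarrow> 'a::real_normed_field) =
    (if \<forall>i. count N i \<le> \<alpha> i then Cb y (\<lambda>i. \<alpha> i - count N i) else (\<lambda>x. 0))"
proof (induction N)
  case empty then show ?case by simp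
next
  case (add j N)
  show ?case
  proof (cases "\<forall>i. count N i \<le> \<alpha> i")
    case True
    have IH: "DM (image_mset b N) (Cb y \<alpha> :: real^'r \<Rightarrow> 'a) = Cb y (\<lambda>i. \<alpha> i - count N i)"
      unfolding add.IH using True by (rule if_P)
    have d: "dd (b j) (Cb y (\<lambda>i. \<alpha> i - count N i) :: real^'r \<Rightarrow> 'a) =
      (if \<alpha> j - count N j = 0 then (\<lambda>x. 0) else Cb y ((\<lambda>i. \<alpha> i - count N i)(j := \<alpha> j - count N j - 1)))"
      using dd_Cb[of y b j "\<lambda>i. \<alpha> i - count N i"] sh by simp
    have e1: "(\<forall>i. count (add_mset j N) i \<le> \<alpha> i) \<longleftrightarrow> count N j < \<alpha> j"
      using True by (auto simp: Suc_le_eq)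
    have e2: "(\<lambda>i. \<alpha> i - count N i)(j := \<alpha> j - count N j - 1) = (\<lambda>i. \<alpha> i - count (add_mset j N) i)"
      by (auto simp: fun_eq_iff)
    have L: "DM (image_mset b (add_mset j N)) (Cb y \<alpha> :: real^'r \<Rightarrow> 'a) = dd (b j) (Cb y (\<lambda>i. \<alpha> i - count N i))"
      using IH by simp
    show ?thesis
    proof (cases "count N j < \<alpha> j")
      case True
      then have "\<alpha> j - count N j \<noteq> 0" by simp
      then have "DM (image_mset b (add_mset j N)) (Cb y \<alpha> :: real^'r \<Rightarrow> 'a) = Cb y (\<lambda>i. \<alpha> i - count (add_mset j N) i)"
        unfolding L d e2 by (rule if_not_P)
      then show ?thesis unfolding if_P[OF e1[THEN iffD2, OF True]] .
    next
      case False
      then have "\<alpha> j - count N j = 0" by simp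
      then have "DM (image_mset b (add_mset j N)) (Cb y \<alpha> :: real^'r \<Rightarrow> 'a) = (\<lambda>x. 0)"
        unfolding L d by (rule if_P)
      moreover have na: "\<not> (\<forall>i. count (add_mset j N) i \<le> \<alpha> i)" using e1 False by blast
      ultimately show ?thesis unfolding if_not_P[OF na] by simp
    qed
  next
    case False
    have IH: "DM (image_mset b N) (Cb y \<alpha> :: real^'r \<Rightarrow> 'a) = (\<lambda>x. 0)"
      unfolding add.IH using False by (rule if_not_P)
    from False obtain i where i: "\<not> count N i \<le> \<alpha> i" by blast
    have "count N i \<le> count (add_mset j N) i" by simp
    then have na: "\<not> (\<forall>i. count (add_mset j N) i \<le> \<alpha> i)" using i le_trans by blast
    have "DM (image_mset b (add_mset j N)) (Cb y \<alpha> :: real^'r \<Rightarrow> 'a) = (\<lambda>x. 0)"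
      using IH by (simp add: dd_def)
    then show ?thesis unfolding if_not_P[OF na] .
  qed
qed


lemma backward:
  fixes p :: "real^'r \<Rightarrow> 'a::real_normed_field" and y :: "'r \<Rightarrow> real^'r \<Rightarrow> real" and b :: "'r \<Rightarrow> real^'r"
  assumes G: "G = lat b" and y_lin: "\<And>i. linear (y i)"
    and y_shift: "\<And>i j x. y i (x + b j) = y i x + (if i = j then 1 else 0)"
  shows "continuous_on UNIV p \<Longrightarrow> DV G (Suc n) p \<Longrightarrow> PP G n p"
proof (induction n arbitrary: p)
  case 0
  have "\<forall>g\<in>G. \<forall>x. p (x + g) = p x"
  proof (intro ballI allI)
    fix g x assume "g \<in> G"
    then have "DM {#g#} p = (\<lambda>_. 0)" using 0(2)[unfolded DV_def, rule_format, of "{#g#}"] by simp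
    then have "dd g p x = 0" by simp
    then show "p (x + g) = p x" by (simp add: dd_def)
  qed
  then have "periodic_cont G p" unfolding periodic_cont_def using 0(1) by blast
  then show ?case by (rule PP.per)
next
  case (Suc n)
  define m where "m = Suc n"
  have bG: "b i \<in> G" for i using G lat_b by simp
  have imG: "set_mset (image_mset b N) \<subseteq> G" for N using bG by auto
  define A where "A \<alpha> = DM (image_mset b (ms \<alpha>)) p" for \<alpha>
  define T where "T = {\<alpha> :: 'r \<Rightarrow> nat. sum \<alpha> UNIV = m}"
  have finT: "finite T"
    by (rule finite_subset[OF _ finite_Sdeg[of m]]) (auto simp: T_def Sdeg_def)
  have Aper: "periodic_cont G (A \<alpha>)" if "\<alpha> \<in> T" for \<alpha>
  proof -
    have "continuous_on UNIV (A \<alpha>)" unfolding A_def by (rule DM_cont[OF Suc.prems(1)])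
    moreover have "A \<alpha> (x + g) = A \<alpha> x" if "g \<in> G" for g x
    proof -
      have "size (add_mset g (image_mset b (ms \<alpha>))) = Suc m" using \<open>\<alpha> \<in> T\<close> by (simp add: size_ms T_def)
      moreover have "set_mset (add_mset g (image_mset b (ms \<alpha>))) \<subseteq> G" using that imG by auto
      ultimately have "DM (add_mset g (image_mset b (ms \<alpha>))) p = (\<lambda>_. 0)"
        using Suc.prems(2) unfolding DV_def m_def by blast
      then have "dd g (A \<alpha>) x = 0" unfolding A_def by simp
      then show ?thesis by (simp add: dd_def)
    qed
    ultimately show ?thesis unfolding periodic_cont_def by blast
  qed
  define q where "q x = (\<Sum>\<alpha>\<in>T. A \<alpha> x * Cb y \<alpha> x)" for x
  have qPP: "PP G m q" unfolding q_def[abs_def]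
  proof (rule PP_sum)
    fix \<alpha> assume a: "\<alpha> \<in> T"
    have "PP G (sum \<alpha> UNIV) (Cb y \<alpha> :: real^'r \<Rightarrow> 'a)" by (rule PP_Cb[OF y_lin])
    then have "PP G m (Cb y \<alpha> :: real^'r \<Rightarrow> 'a)" using a T_def by simp
    then show "PP G m (\<lambda>x. A \<alpha> x * Cb y \<alpha> x)" by (rule PP.mul[OF Aper[OF a]])
  qed
  define u where "u x = p x - q x" for x
  have ucont: "continuous_on UNIV u" unfolding u_def[abs_def]
    by (rule continuous_on_diff[OF Suc.prems(1) PP_cont[OF qPP]])
  have uDV: "DV G (Suc m) u"
    unfolding DV_def
  proof (intro allI impI)
    fix M assume M: "size M = Suc m \<and> set_mset M \<subseteq> G"
    have "DM M p = (\<lambda>_. 0)" using Suc.prems(2) M unfolding DV_def m_def by auto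
    moreover have "DM M q = (\<lambda>_. 0)" using PP_DV[OF qPP] M unfolding DV_def by auto
    ultimately show "DM M u = (\<lambda>_. 0)" unfolding u_def[abs_def] DM_diff by simp
  qed
  have ubas: "DM (image_mset b N) u = (\<lambda>_. 0)" if N: "size N = m" for N
  proof
    fix x
    have cT: "count N \<in> T" using N size_count[of N] T_def by simp
    have eq: "(\<forall>i. count N i \<le> \<alpha> i) \<longleftrightarrow> \<alpha> = count N" if aT: "\<alpha> \<in> T" for \<alpha>
    proof
      assume le: "\<forall>i. count N i \<le> \<alpha> i"
      show "\<alpha> = count N"
      proof (rule ccontr)
        assume "\<alpha> \<noteq> count N"
        then obtain i where "count N i \<noteq> \<alpha> i" by (metis ext)
        with le have "count N i < \<alpha> i" using le_neq_trans by blast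
        then have "sum (count N) UNIV < sum \<alpha> UNIV" using le by (intro sum_strict_mono_ex1) auto
        then show False using aT N size_count[of N] T_def by simp
      qed
    qed simp
    have "DM (image_mset b N) q x = (\<Sum>\<alpha>\<in>T. DM (image_mset b N) (\<lambda>x. A \<alpha> x * Cb y \<alpha> x) x)"
      unfolding q_def[abs_def] DM_sum ..
    also have "\<dots> = (\<Sum>\<alpha>\<in>T. A \<alpha> x * DM (image_mset b N) (Cb y \<alpha>) x)"
      by (rule sum.cong) (simp_all add: DM_mul[OF Aper imG])
    also have "\<dots> = (\<Sum>\<alpha>\<in>T. if \<alpha> = count N then A \<alpha> x else 0)"
    proof (rule sum.cong)
      fix \<alpha> assume aT: "\<alpha> \<in> T"
      show "A \<alpha> x * DM (image_mset b N) (Cb y \<alpha>) x = (if \<alpha> = count N then A \<alpha> x else 0)"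
      proof (cases "\<alpha> = count N")
        case True
        then have "DM (image_mset b N) (Cb y \<alpha> :: real^'r \<Rightarrow> 'a) = Cb y (\<lambda>i. 0)"
          unfolding DM_Cb[OF y_shift] by simp
        then show ?thesis using True by (simp add: Cb_zero)
      next
        case False
        then have "DM (image_mset b N) (Cb y \<alpha> :: real^'r \<Rightarrow> 'a) = (\<lambda>x. 0)"
        proof -
          have na: "\<not> (\<forall>i. count N i \<le> \<alpha> i)" using eq[OF aT] False by blast
          show ?thesis unfolding DM_Cb[OF y_shift] if_not_P[OF na] ..
        qed
        then show ?thesis using False by simp
      qed
    qed simp
    also have "\<dots> = A (count N) x" using finT cT by (simp add: sum.delta')
    also have "\<dots> = DM (image_mset b N) p x" by (simp add: A_def ms_count)
    finally show "DM (image_mset b N) u x = 0" unfolding u_def[abs_def] DM_diff by simp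
  qed
  have "DV G m u" by (rule extend[OF G uDV ubas])
  then have "PP G n u" using Suc.IH[OF ucont] m_def by simp
  then have "PP G m u" using PP_Suc m_def by simp
  then have "PP G m (\<lambda>x. q x + u x)" by (rule PP.add[OF qPP])
  moreover have "(\<lambda>x. q x + u x) = p" by (simp add: u_def)
  ultimately show ?case using m_def by simp
qed

theorem proposition3p2:
  fixes G :: "(real^'r) set" and n :: nat and p :: "real^'r \<Rightarrow> 'a::real_normed_field"
  assumes "full_lattice G"
    and "continuous_on UNIV p"
  shows "periodic_poly G n p \<longleftrightarrow> D_vanishes G (Suc n) p"
proof -
  obtain b :: "'r \<Rightarrow> real^'r" where binj: "inj b" and bind: "independent (range b)" and G: "G = lat b"
    using assms(1) unfolding full_lattice_def lat_def by blast
  have "\<forall>i. \<exists>l. linear l \<and> (\<forall>v\<in>range b. l v = (if v = b i then (1::real) else 0))"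
  proof
    fix i
    show "\<exists>l. linear l \<and> (\<forall>v\<in>range b. l v = (if v = b i then (1::real) else 0))"
      by (rule linear_independent_extend[OF bind])
  qed
  then obtain y :: "'r \<Rightarrow> real^'r \<Rightarrow> real" where
    yy: "\<forall>i. linear (y i) \<and> (\<forall>v\<in>range b. y i v = (if v = b i then 1 else 0))"
    using choice[of "\<lambda>i l. linear l \<and> (\<forall>v\<in>range b. l v = (if v = b i then (1::real) else 0))"] by blast
  have y: "\<And>i. linear (y i)" "\<And>i v. v \<in> range b \<Longrightarrow> y i v = (if v = b i then 1 else 0)"
    using yy by auto
  have y_shift: "y i (x + b j) = y i x + (if i = j then 1 else 0)" for i j x
  proof -
    have "y i (x + b j) = y i x + y i (b j)" by (rule linear_add[OF y(1)])
    moreover have "y i (b j) = (if b j = b i then 1 else 0)" by (rule y(2)) simp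
    moreover have "(b j = b i) \<longleftrightarrow> i = j" using binj by (auto dest: injD)
    ultimately show ?thesis by simp
  qed
  show ?thesis
  proof
    assume "periodic_poly G n p"
    then show "D_vanishes G (Suc n) p" unfolding D_vanishes_DV by (intro PP_DV periodic_poly_PP)
  next
    assume "D_vanishes G (Suc n) p"
    then have "PP G n p" using backward[OF G y(1) y_shift assms(2)] unfolding D_vanishes_DV by blast
    then show "periodic_poly G n p" by (rule PP_periodic_poly)
  qed
qed

end
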